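(* In the setting of the adaptive implicit-explicit iteration described in the context, suppose there are $a>0$ and $\eta_{\min}>0$ such that the step size satisfies $0<\eta_{\min}\le\eta\le\frac1{\|\bm T\|+2a}$. Then every limit point $(\bm d_*,\lambda_* )$ of the sequence $\{(\bm d_k,\lambda_k)\}$ is a KKT point of the problem $\min_{\|\bm d\|_2\le r}f(\bm d)$, i.e. it satisfies $\bm g+(\bm H+\lambda_*\bm I)\bm d_*=0$, $\lambda_*\ge0$, $\|\bm d_*\|_2\le r$ and $\lambda_*(\|\bm d_*\|_2-r)=0$.
   Context: Let $n\ge1$, $r>0$, $\bm g\in\mathbb R^n$ with $\bm g\neq0$, and $\bm H=\bm D+\bm T\in\mathbb R^{n\times n}$, where $\bm D$ is diagonal with nonnegative diagonal entries $D_{i,i}$ and $\bm T$ is symmetric; $\|\bm T\|$ is the spectral norm. Let $f(\bm d)=\bm g^\top\bm d+\frac12\bm d^\top\bm H\bm d$. Adaptive implicit-explicit iteration with step size $\eta>0$: set $\bm d_0=-r\bm g/\|\bm g\|_2$ and $\lambda_0=0$. For $k=0,1,2,\dots$ (run indefinitely): let $\bm b_k=\bm d_k-\eta(\bm g+\bm T\bm d_k)$ and $\phi_k(\lambda)=\sum_{i=1}^n\big([\bm b_k]_i/(1+\eta(D_{i,i}+\lambda))\big)^2$; set $\lambda_{k+1}=0$ if $\phi_k(0)\le r^2$, and otherwise let $\lambda_{k+1}>0$ be the solution of $\phi_k(\lambda)=r^2$; then $\bm d_{k+1}=(\bm I+\eta(\bm D+\lambda_{k+1}\bm I))^{-1}\bm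 b_k$. *)

theory Defs
  imports "HOL-Analysis.Analysis"
begin

definition iex_b :: "real \<Rightarrow> real^'n \<Rightarrow> real^'n^'n \<Rightarrow> real^'n \<Rightarrow> real^'n" where
  "iex_b \<eta> g T d = d - \<eta> *\<^sub>R (g + T *v d)"

definition iex_phi :: "real \<Rightarrow> real^'n^'n \<Rightarrow> real^'n \<Rightarrow> real \<Rightarrow> real" where
  "iex_phi \<eta> D b mu = (\<Sum>i\<in>UNIV. (b $ i / (1 + \<eta> * (D $ i $ i + mu)))\<^sup>2)"

end

theory Submission
  imports Defs
begin

lemma diag_mv:
  fixes D :: "real^'n^'n"
  assumes "\<forall>i j. i \<noteq> j \<longrightarrow> D $ i $ j = 0"
  shows "(D *v y) $ i = D $ i $ i * y $ i"
proof -
  have "(D *v y) $ i = (\<Sum>j\<in>UNIV. D $ i $ j * y $ j)" by (simp add: matrix_vector_mult_def)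
  also have "\<dots> = D $ i $ i * y $ i"
    by (subst sum.remove[of _ i]) (auto simp: assms)
  finally show ?thesis .
qed

lemma diag_inv:
  fixes D :: "real^'n^'n" and c :: real
  assumes "\<forall>i j. i \<noteq> j \<longrightarrow> D $ i $ j = 0"
    and "\<forall>i. 1 + e * (D $ i $ i + c) > 0"
  shows "(mat 1 + e *\<^sub>R (D + c *\<^sub>R mat 1)) *v (matrix_inv (mat 1 + e *\<^sub>R (D + c *\<^sub>R mat 1)) *v b) = b"
proof -
  define M where "M = mat 1 + e *\<^sub>R (D + c *\<^sub>R mat 1)"
  define N :: "real^'n^'n" where "N = (\<chi> i j. if i = j then 1 / (1 + e * (D $ i $ i + c)) else 0)"
  have Mij: "M $ i $ j = (if i = j then 1 + e * (D $ i $ i + c) else 0)" for i j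
    using assms(1) by (auto simp: M_def mat_def)
  have "M ** N = mat 1"
  proof -
    have "(M ** N) $ i $ j = (if i = j then 1 else 0)" for i j
    proof -
      have "(M ** N) $ i $ j = (\<Sum>k\<in>UNIV. M $ i $ k * N $ k $ j)" by (simp add: matrix_matrix_mult_def)
      also have "\<dots> = M $ i $ i * N $ i $ j"
        by (subst sum.remove[of _ i]) (auto simp: Mij)
      also have "\<dots> = (if i = j then 1 else 0)"
        using assms(2)[rule_format, of i] by (auto simp: Mij N_def)
      finally show ?thesis .
    qed
    then show ?thesis by (simp add: vec_eq_iff mat_def)
  qed
  moreover have "N ** M = mat 1"
  proof -
    have "(N ** M) $ i $ j = (if i = j then 1 else 0)" for i j
    proof -
      have "(N ** M) $ i $ j = (\<Sum>k\<in>UNIV. N $ i $ k * M $ k $ j)" by (simp add: matrix_matrix_mult_def)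
      also have "\<dots> = N $ i $ i * M $ i $ j"
        by (subst sum.remove[of _ i]) (auto simp: N_def)
      also have "\<dots> = (if i = j then 1 else 0)"
        using assms(2)[rule_format, of i] by (auto simp: Mij N_def)
      finally show ?thesis .
    qed
    then show ?thesis by (simp add: vec_eq_iff mat_def)
  qed
  ultimately have ex: "\<exists>A'. M ** A' = mat 1 \<and> A' ** M = mat 1" by blast
  have "M ** matrix_inv M = mat 1"
    unfolding matrix_inv_def using someI_ex[OF ex] by blast
  then have "M *v (matrix_inv M *v b) = b"
    by (simp add: matrix_vector_mul_assoc)
  then show ?thesis by (simp add: M_def)
qed

lemma scaleR_mv:
  fixes A :: "real^'n^'n"
  shows "(e *\<^sub>R A) *v y = e *\<^sub>R (A *v y)"
  by (simp add: vec_eq_iff matrix_vector_mult_def sum_distrib_left algebra_simps)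

lemma M_mv:
  fixes D :: "real^'n^'n"
  shows "(mat 1 + e *\<^sub>R (D + c *\<^sub>R mat 1)) *v y = y + e *\<^sub>R (D *v y + c *\<^sub>R y)"
  by (simp add: matrix_vector_mult_add_rdistrib scaleR_mv)

lemma sym_quad:
  fixes S :: "real^'n^'n"
  assumes "transpose S = S"
  shows "x \<bullet> (S *v h) = h \<bullet> (S *v x)"
proof -
  have "x \<bullet> (S *v h) = (x v* S) \<bullet> h" by (simp add: dot_lmul_matrix)
  also have "x v* S = transpose S *v x" by simp
  finally show ?thesis using assms by (simp add: inner_commute)
qed

lemma quad_exp:
  fixes S :: "real^'n^'n"
  assumes "transpose S = S"
  shows "(x + h) \<bullet> (S *v (x + h)) = x \<bullet> (S *v x) + 2 * (h \<bullet> (S *v x)) + h \<bullet> (S *v h)"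
  using sym_quad[OF assms, of x h]
  by (simp add: matrix_vector_right_distrib inner_add_left inner_add_right)

lemma diag_sym:
  fixes D :: "real^'n^'n"
  assumes "\<forall>i j. i \<noteq> j \<longrightarrow> D $ i $ j = 0"
  shows "transpose D = D"
  using assms by (auto simp: vec_eq_iff transpose_def) (metis)

lemma diag_psd:
  fixes D :: "real^'n^'n"
  assumes "\<forall>i j. i \<noteq> j \<longrightarrow> D $ i $ j = 0" "\<forall>i. D $ i $ i \<ge> 0"
  shows "h \<bullet> (D *v h) \<ge> 0"
  using assms by (auto simp: inner_vec_def diag_mv[OF assms(1)] intro!: sum_nonneg)
     (metis mult.left_commute mult_nonneg_nonneg zero_le_square)

lemma mv_neg:
  fixes A :: "real^'n^'n"
  shows "A *v (- h) = - (A *v h)"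
  by (simp add: vec_eq_iff matrix_vector_mult_def sum_negf)

lemma descent:
  fixes g x y :: "real^'n" and D T :: "real^'n^'n" and e c a lm r :: real
  assumes D_diag: "\<forall>i j. i \<noteq> j \<longrightarrow> D $ i $ j = 0"
    and D_nonneg: "\<forall>i. D $ i $ i \<ge> 0"
    and T_sym: "transpose T = T"
    and e: "e > 0" and a: "a > 0" and c: "c = onorm (\<lambda>x. T *v x)"
    and ec: "e \<le> 1 / (c + 2 * a)"
    and E: "y - x + e *\<^sub>R (g + T *v x + D *v y + lm *\<^sub>R y) = 0"
    and lm: "lm \<ge> 0" and lmr: "lm > 0 \<Longrightarrow> norm y = r" and xr: "norm x \<le> r"
  shows "g \<bullet> y + 1/2 * (y \<bullet> ((D + T) *v y)) \<le> g \<bullet> x + 1/2 * (x \<bullet> ((D + T) *v x)) - a * (norm (y - x))\<^sup>2"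
proof -
  define h where "h = y - x"
  have yx: "y = x + h" by (simp add: h_def)
  have xy: "x = y + (- h)" by (simp add: h_def)
  have c0: "c \<ge> 0" using c onorm_pos_le[OF matrix_vector_mul_bounded_linear] by simp
  have ie: "1 / e \<ge> c + 2 * a"
  proof -
    have "e * (c + 2 * a) \<le> 1" using ec c0 a by (simp add: field_simps)
    then show ?thesis using e by (simp add: field_simps)
  qed
  have G: "g + T *v x + D *v y + lm *\<^sub>R y = - (1 / e) *\<^sub>R h"
  proof -
    have "e *\<^sub>R (g + T *v x + D *v y + lm *\<^sub>R y) = - h" using E by (simp add: h_def algebra_simps)
    then have "(1/e) *\<^sub>R (e *\<^sub>R (g + T *v x + D *v y + lm *\<^sub>R y)) = (1/e) *\<^sub>R (- h)" by simp
    then show ?thesis using e by simp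
  qed
  have qT: "y \<bullet> (T *v y) = x \<bullet> (T *v x) + 2 * (h \<bullet> (T *v x)) + h \<bullet> (T *v h)"
    using quad_exp[OF T_sym, of x h] yx by simp
  have qD: "x \<bullet> (D *v x) = y \<bullet> (D *v y) - 2 * (h \<bullet> (D *v y)) + h \<bullet> (D *v h)"
    using quad_exp[OF diag_sym[OF D_diag], of y "-h"] xy by (simp add: mv_neg)
  have hD: "h \<bullet> (D *v h) \<ge> 0" by (rule diag_psd[OF D_diag D_nonneg])
  have hT: "h \<bullet> (T *v h) \<le> c * (norm h)\<^sup>2"
  proof -
    have "h \<bullet> (T *v h) \<le> norm h * norm (T *v h)" by (rule norm_cauchy_schwarz)
    also have "\<dots> \<le> norm h * (c * norm h)"
      using onorm[OF matrix_vector_mul_bounded_linear, of T h] c by (simp add: mult_left_mono)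
    finally show ?thesis by (simp add: power2_eq_square mult.commute mult.left_commute)
  qed
  have hy: "lm * (h \<bullet> y) \<ge> 0"
  proof (cases "lm > 0")
    case True
    have "h \<bullet> y = y \<bullet> y - x \<bullet> y" by (simp add: h_def inner_diff_left)
    moreover have "x \<bullet> y \<le> norm x * norm y" by (rule norm_cauchy_schwarz)
    moreover have "y \<bullet> y = r * r" using lmr[OF True] by (metis power2_eq_square power2_norm_eq_inner)
    moreover have "norm x * norm y \<le> r * r" using xr lmr[OF True] by (metis mult_right_mono norm_ge_zero)
    ultimately show ?thesis using True by simp
  qed (use lm in simp)
  have hh: "h \<bullet> h = (norm h)\<^sup>2" by (simp add: power2_norm_eq_inner)
  have key: "h \<bullet> (g + T *v x + D *v y + lm *\<^sub>R y) = - (1/e) * (norm h)\<^sup>2"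
    using G hh by simp
  have "g \<bullet> y + 1/2 * (y \<bullet> ((D + T) *v y)) - (g \<bullet> x + 1/2 * (x \<bullet> ((D + T) *v x)))
      = g \<bullet> h + 1/2 * (y \<bullet> (D *v y) - x \<bullet> (D *v x)) + 1/2 * (y \<bullet> (T *v y) - x \<bullet> (T *v x))"
    by (simp add: matrix_vector_mult_add_rdistrib inner_add_right h_def inner_diff_right algebra_simps)
  also have "\<dots> = h \<bullet> (g + T *v x + D *v y + lm *\<^sub>R y) - lm * (h \<bullet> y) - 1/2 * (h \<bullet> (D *v h)) + 1/2 * (h \<bullet> (T *v h))"
    using qT qD by (simp add: inner_add_right inner_commute algebra_simps)
  also have "\<dots> \<le> - (1/e) * (norm h)\<^sup>2 + 1/2 * (c * (norm h)\<^sup>2)"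
    using key hy hD hT by linarith
  also have "\<dots> \<le> - a * (norm h)\<^sup>2"
  proof -
    define n2 where "n2 = (norm h)\<^sup>2"
    have n0: "n2 \<ge> 0" by (simp add: n2_def)
    have "(c + 2 * a) * n2 \<le> (1/e) * n2" using mult_right_mono[OF ie n0] .
    then have "c * n2 + 2 * a * n2 \<le> (1/e) * n2" by (simp add: distrib_right)
    moreover have "c * n2 \<ge> 0" using c0 n0 by simp
    moreover have "a * n2 \<ge> 0" using a n0 by simp
    moreover have "- (1/e) * n2 = - ((1/e) * n2)" "- a * n2 = - (a * n2)" "2 * a * n2 = 2 * (a * n2)" by simp_all
    ultimately show ?thesis unfolding n2_def[symmetric] by linarith
  qed
  finally show ?thesis by (simp add: h_def)
qed

theorem mainTheorem7:
  fixes g :: "real^'n" and D T :: "real^'n^'n" and r \<eta> a \<eta>min :: real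
    and d :: "nat \<Rightarrow> real^'n" and lam :: "nat \<Rightarrow> real"
    and ds :: "real^'n" and ls :: real
  assumes r_pos: "r > 0"
    and g_nz: "g \<noteq> 0"
    and D_diag: "\<forall>i j. i \<noteq> j \<longrightarrow> D $ i $ j = 0"
    and D_nonneg: "\<forall>i. D $ i $ i \<ge> 0"
    and T_sym: "transpose T = T"
    and a_pos: "a > 0"
    and etamin_pos: "\<eta>min > 0"
    and eta_lo: "\<eta>min \<le> \<eta>"
    and eta_hi: "\<eta> \<le> 1 / (onorm (\<lambda>x. T *v x) + 2 * a)"
    and d0: "d 0 = - (r / norm g) *\<^sub>R g"
    and lam0: "lam 0 = 0"
    and lam_step0: "\<forall>k. iex_phi \<eta> D (iex_b \<eta> g T (d k)) 0 \<le> r\<^sup>2 \<longrightarrow> lam (Suc k) = 0"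
    and lam_step1: "\<forall>k. iex_phi \<eta> D (iex_b \<eta> g T (d k)) 0 > r\<^sup>2 \<longrightarrow>
                      lam (Suc k) > 0 \<and> iex_phi \<eta> D (iex_b \<eta> g T (d k)) (lam (Suc k)) = r\<^sup>2"
    and d_step: "\<forall>k. d (Suc k) =
                   matrix_inv (mat 1 + \<eta> *\<^sub>R (D + lam (Suc k) *\<^sub>R mat 1)) *v iex_b \<eta> g T (d k)"
    and limpt: "\<exists>s. strict_mono s \<and> ((\<lambda>k. (d (s k), lam (s k))) \<longlongrightarrow> (ds, ls)) sequentially"
  shows "g + (D + T) *v ds + ls *\<^sub>R ds = 0 \<and> ls \<ge> 0 \<and> norm ds \<le> r \<and> ls * (norm ds - r) = 0"
proof -
  obtain s where s_mono: "strict_mono s" and s_lim: "((\<lambda>k. (d (s k), lam (s k))) \<longlongrightarrow> (ds, ls)) sequentially"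
    using limpt by blast
  have ds_lim: "(\<lambda>k. d (s k)) \<longlonglongrightarrow> ds" using tendsto_fst[OF s_lim] by simp
  have ls_lim: "(\<lambda>k. lam (s k)) \<longlonglongrightarrow> ls" using tendsto_snd[OF s_lim] by simp
  have eta_pos: "\<eta> > 0" using etamin_pos eta_lo by linarith
  define b where "b k = iex_b \<eta> g T (d k)" for k
  have lam_nn: "lam k \<ge> 0" for k
  proof (cases k)
    case 0 then show ?thesis using lam0 by simp
  next
    case (Suc j) then show ?thesis using lam_step0[rule_format, of j] lam_step1[rule_format, of j]
      by (cases "iex_phi \<eta> D (iex_b \<eta> g T (d j)) 0 \<le> r\<^sup>2") auto
  qed
  have pos: "\<forall>i. 1 + \<eta> * (D $ i $ i + lam (Suc k)) > 0" for k
    using D_nonneg lam_nn[of "Suc k"] eta_pos by (simp add: add_pos_nonneg)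
  have S2: "d (Suc k) + \<eta> *\<^sub>R (D *v d (Suc k) + lam (Suc k) *\<^sub>R d (Suc k)) = b k" for k
  proof -
    have "(mat 1 + \<eta> *\<^sub>R (D + lam (Suc k) *\<^sub>R mat 1)) *v d (Suc k) = b k"
      using diag_inv[OF D_diag pos[of k], of "b k"] d_step by (simp add: b_def)
    then show ?thesis by (simp only: M_mv)
  qed
  have S3: "d (Suc k) $ i = b k $ i / (1 + \<eta> * (D $ i $ i + lam (Suc k)))" for k i
  proof -
    have "b k $ i = d (Suc k) $ i * (1 + \<eta> * (D $ i $ i + lam (Suc k)))"
      using arg_cong[OF S2[of k], of "\<lambda>v. v $ i"] by (simp add: diag_mv[OF D_diag] algebra_simps)
    then show ?thesis using pos[of k] by (metis less_irrefl nonzero_mult_div_cancel_right)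
  qed
  have S4: "(norm (d (Suc k)))\<^sup>2 = iex_phi \<eta> D (b k) (lam (Suc k))" for k
    unfolding power2_norm_eq_inner inner_vec_def iex_phi_def S3 by (simp add: power2_eq_square)
  have S5: "norm (d (Suc k)) \<le> r \<and> lam (Suc k) * (norm (d (Suc k)) - r) = 0" for k
  proof (cases "iex_phi \<eta> D (b k) 0 \<le> r\<^sup>2")
    case True
    then have "lam (Suc k) = 0" using lam_step0 b_def by simp
    then have "(norm (d (Suc k)))\<^sup>2 \<le> r\<^sup>2" using S4[of k] True by simp
    then show ?thesis using r_pos \<open>lam (Suc k) = 0\<close> by (simp add: power2_le_iff_abs_le)
  next
    case False
    then have "iex_phi \<eta> D (b k) (lam (Suc k)) = r\<^sup>2" using lam_step1 b_def by simp
    then have "(norm (d (Suc k)))\<^sup>2 = r\<^sup>2" using S4[of k] by simp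
    then have "norm (d (Suc k)) = r" using r_pos by (simp add: power2_eq_iff_nonneg)
    then show ?thesis by simp
  qed
  have S6: "norm (d k) \<le> r" for k
  proof (cases k)
    case 0 then show ?thesis using d0 g_nz r_pos by simp
  next
    case (Suc j) then show ?thesis using S5 by simp
  qed
  have compl: "lam k * (norm (d k) - r) = 0" for k
    by (cases k) (use lam0 S5 in auto)
  have E: "d (Suc k) - d k + \<eta> *\<^sub>R (g + T *v d k + D *v d (Suc k) + lam (Suc k) *\<^sub>R d (Suc k)) = 0" for k
    using S2[of k] by (simp add: b_def iex_b_def algebra_simps)
  define F where "F v = g \<bullet> v + 1/2 * (v \<bullet> ((D + T) *v v))" for v
  have desc: "F (d (Suc k)) \<le> F (d k) - a * (norm (d (Suc k) - d k))\<^sup>2" for k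
  proof -
    have lr: "lam (Suc k) > 0 \<Longrightarrow> norm (d (Suc k)) = r" using S5[of k] by auto
    show ?thesis unfolding F_def
      by (rule descent[OF D_diag D_nonneg T_sym eta_pos a_pos refl eta_hi E[of k] lam_nn[of "Suc k"] lr S6[of k]])
  qed
  have Fdec: "decseq (\<lambda>k. F (d k))"
  proof (rule decseq_SucI)
    fix k show "F (d (Suc k)) \<le> F (d k)" using desc[of k] a_pos by (smt (verit) zero_le_power2 mult_nonneg_nonneg)
  qed
  have Fcont: "((\<lambda>k. F (d (s k))) \<longlonglongrightarrow> F ds)"
    unfolding F_def
    by (intro tendsto_intros ds_lim bounded_linear.tendsto[OF matrix_vector_mul_bounded_linear])
  have Fdec_s: "decseq (\<lambda>k. F (d (s k)))"
    using Fdec s_mono by (simp add: decseq_def strict_mono_less_eq)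
  have lb: "F ds \<le> F (d k)" for k
  proof -
    have "F ds \<le> F (d (s k))" using decseq_ge[OF Fdec_s Fcont] .
    also have "\<dots> \<le> F (d k)" using Fdec seq_suble[OF s_mono, of k] by (simp add: decseq_def)
    finally show ?thesis .
  qed
  obtain L where FL: "(\<lambda>k. F (d k)) \<longlonglongrightarrow> L" using decseq_convergent[OF Fdec, of "F ds"] lb by blast
  have diff0: "(\<lambda>k. F (d k) - F (d (Suc k))) \<longlonglongrightarrow> 0"
    using tendsto_diff[OF FL LIMSEQ_Suc[OF FL]] by simp
  have h2: "(\<lambda>k. (norm (d (Suc k) - d k))\<^sup>2) \<longlonglongrightarrow> 0"
  proof (rule tendsto_sandwich[where f="\<lambda>k. 0" and h="\<lambda>k. (F (d k) - F (d (Suc k))) / a"])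
    show "\<forall>\<^sub>F k in sequentially. 0 \<le> (norm (d (Suc k) - d k))\<^sup>2" by simp
    show "\<forall>\<^sub>F k in sequentially. (norm (d (Suc k) - d k))\<^sup>2 \<le> (F (d k) - F (d (Suc k))) / a"
      using desc a_pos by (simp add: field_simps)
    show "(\<lambda>k. 0::real) \<longlonglongrightarrow> 0" by simp
    show "(\<lambda>k. (F (d k) - F (d (Suc k))) / a) \<longlonglongrightarrow> 0" using tendsto_divide_zero[OF diff0] by simp
  qed
  have h0: "(\<lambda>k. d (Suc k) - d k) \<longlonglongrightarrow> 0"
  proof -
    have "(\<lambda>k. sqrt ((norm (d (Suc k) - d k))\<^sup>2)) \<longlonglongrightarrow> sqrt 0" by (intro tendsto_intros h2)
    then have "(\<lambda>k. norm (d (Suc k) - d k)) \<longlonglongrightarrow> 0" by simp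
    then show ?thesis by (simp add: tendsto_norm_zero_iff)
  qed
  define t where "t k = s (Suc k) - 1" for k
  have s1: "s (Suc k) \<ge> 1" for k using seq_suble[OF s_mono, of "Suc k"] by simp
  have tS: "Suc (t k) = s (Suc k)" for k using s1[of k] by (simp add: t_def)
  have t_mono: "strict_mono t"
    unfolding strict_mono_def t_def
  proof (intro allI impI)
    fix m n :: nat assume "m < n"
    then have "s (Suc m) < s (Suc n)" using s_mono by (simp add: strict_mono_def)
    then show "s (Suc m) - 1 < s (Suc n) - 1" using s1[of m] by linarith
  qed
  have dS: "(\<lambda>k. d (Suc (t k))) \<longlonglongrightarrow> ds"
    unfolding tS using LIMSEQ_Suc[OF ds_lim] .
  have lS: "(\<lambda>k. lam (Suc (t k))) \<longlonglongrightarrow> ls"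
    unfolding tS using LIMSEQ_Suc[OF ls_lim] .
  have ht: "(\<lambda>k. d (Suc (t k)) - d (t k)) \<longlonglongrightarrow> 0"
    using LIMSEQ_subseq_LIMSEQ[OF h0 t_mono] by (simp add: o_def)
  have dt: "(\<lambda>k. d (t k)) \<longlonglongrightarrow> ds"
  proof -
    have "(\<lambda>k. d (Suc (t k)) - (d (Suc (t k)) - d (t k))) \<longlonglongrightarrow> ds - 0"
      by (intro tendsto_diff dS ht)
    then show ?thesis by simp
  qed
  have lim1: "(\<lambda>k. d (Suc (t k)) - d (t k) + \<eta> *\<^sub>R (g + T *v d (t k) + D *v d (Suc (t k)) + lam (Suc (t k)) *\<^sub>R d (Suc (t k))))
      \<longlonglongrightarrow> 0 + \<eta> *\<^sub>R (g + T *v ds + D *v ds + ls *\<^sub>R ds)"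
    by (intro tendsto_intros ht dt dS lS bounded_linear.tendsto[OF matrix_vector_mul_bounded_linear])
  have "0 + \<eta> *\<^sub>R (g + T *v ds + D *v ds + ls *\<^sub>R ds) = 0"
  proof -
    have "(\<lambda>k. d (Suc (t k)) - d (t k) + \<eta> *\<^sub>R (g + T *v d (t k) + D *v d (Suc (t k)) + lam (Suc (t k)) *\<^sub>R d (Suc (t k)))) = (\<lambda>k. 0)"
      using E by simp
    then show ?thesis using LIMSEQ_unique[OF lim1 ] tendsto_const[of 0] by metis
  qed
  then have "\<eta> *\<^sub>R (g + T *v ds + D *v ds + ls *\<^sub>R ds) = 0" by simp
  then have "g + T *v ds + D *v ds + ls *\<^sub>R ds = 0" using eta_pos by simp
  then have KKT: "g + (D + T) *v ds + ls *\<^sub>R ds = 0"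
    by (simp add: matrix_vector_mult_add_rdistrib algebra_simps)
  have ls0: "ls \<ge> 0" using LIMSEQ_le_const[OF ls_lim] lam_nn by blast
  have nr: "norm ds \<le> r"
    using LIMSEQ_le_const2[OF tendsto_norm[OF ds_lim]] S6 by blast
  have "(\<lambda>k. lam (s k) * (norm (d (s k)) - r)) \<longlonglongrightarrow> ls * (norm ds - r)"
    by (intro tendsto_intros ls_lim ds_lim)
  then have cs: "ls * (norm ds - r) = 0"
  proof -
    have "(\<lambda>k. lam (s k) * (norm (d (s k)) - r)) = (\<lambda>k. 0)" using compl by (simp only: fun_eq_iff) blast
    then show ?thesis using LIMSEQ_unique[OF \<open>(\<lambda>k. lam (s k) * (norm (d (s k)) - r)) \<longlonglongrightarrow> ls * (norm ds - r)\<close>] tendsto_const[of 0] by metis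
  qed
  show ?thesis using KKT ls0 nr cs by blast
qed

end
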